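(* Let $X_t \subset X_{t+p}$ be finite simplicial complexes with oriented simplices, the simplices of $X_t$ carrying the same orientations as in $X_{t+p}$. Let $\mathscr{S}_{t+p}$ be a cellular sheaf on $X_{t+p}$ whose stalks are finite-dimensional inner product spaces over $\mathbb{R}$ or $\mathbb{C}$, and let $\mathscr{S}_t$ be its pullback to $X_t$. The projection cochain map $\pi: C^\bullet(X_{t+p};\mathscr{S}_{t+p})\to C^\bullet(X_t;\mathscr{S}_t)$ induces a map $\pi^\bullet: H^q(X_{t+p};\mathscr{S}_{t+p})\to H^q(X_t;\mathscr{S}_t)$ on sheaf cohomology, and the persistent sheaf Laplacian satisfies $$\operatorname{nullity}(\Delta_q^{t,p}) = \dim \operatorname{im}\, \pi^\bullet\big(H^q(X_{t+p};\mathscr{S}_{t+p})\big).$$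
   Context: A cellular sheaf $\mathscr{S}$ on a simplicial complex $X$ assigns to each simplex $\sigma$ a finite-dimensional vector space $\mathscr{S}(\sigma)$ and to each face relation $\sigma\leqslant\tau$ a linear map $\mathscr{S}_{\sigma\leqslant\tau}$, functorially (identity on $\sigma\leqslant\sigma$, compatible with composition). The pullback $\mathscr{S}_t$ has the same stalks and restriction maps as $\mathscr{S}_{t+p}$ on simplices and face relations of $X_t$. $C^q(X;\mathscr{S})=\bigoplus_{\dim\sigma=q}\mathscr{S}(\sigma)$, with inner product making distinct stalks orthogonal; thus $C^q(X_t;\mathscr{S}_t)$ is identified with the subspace of $C^q(X_{t+p};\mathscr{S}_{t+p})$ spanned by stalks over simplices of $X_t$, and $\pi$ is the orthogonal projection onto it. Signed incidence: for $\tau=[v_0,\dots,v_n]$ and $\sigma=[v_0,\dots,\hat v_i,\dots,v_n]$, $[\sigma:\tau]=(-1)^i$ (or $(-1)^{i+1}$ if $\sigma$ is oppositely oriented), and $0$ unless $\sigma$ is a codimension-one face. Coboundary: $d_q|_{\mathscr{S}(\sigma)}=\sum_{\sigma\leqslant\tau}[\sigma:\tau]\mathscr{S}_{\sigma\leqslant\tau}$; $H^q=\ker d_q/\operatorname{im} d_{q-1}$. Write $d^t, d^{t+p}$ for the coboundaries of the two complexes. Persistent sheaf Laplacian: let $\mathbb{C}^{t,p}_{q+1}=\{e\in C^{q+1}(X_{t+p};\mathscr{S}_{t+p}) : (d_q^{t+p})^*(e)\in C^q(X_t;\mathscr{S}_t)\}$, let $\eth_q^{t,p}: C^q(X_t;\mathscr{S}_t)\to\mathbb{C}^{t,p}_{q+1}$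 be the adjoint of $(d_q^{t+p})^*|_{\mathbb{C}^{t,p}_{q+1}}:\mathbb{C}^{t,p}_{q+1}\to C^q(X_t;\mathscr{S}_t)$, and set $\Delta_q^{t,p}=(\eth_q^{t,p})^*\eth_q^{t,p}+d_{q-1}^t(d_{q-1}^t)^*$, an operator on $C^q(X_t;\mathscr{S}_t)$. *)

theory Defs
  imports "HOL-Combinatorics.Permutations" "HOL-Library.Function_Algebras" "Jordan_Normal_Form.Conjugate"
begin

text \<open>An oriented simplex is a nonempty list of distinct vertices; the list order
  fixes the orientation.  A finite oriented simplicial complex is a finite set of
  such lists, containing exactly one oriented representative for each of its
  simplices (vertex sets), and closed under taking nonempty faces.\<close>

definition oriented_complex :: "'v list set \<Rightarrow> bool" where
  "oriented_complex X \<longleftrightarrow>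
     finite X \<and>
     (\<forall>\<sigma>\<in>X. \<sigma> \<noteq> [] \<and> distinct \<sigma>) \<and>
     (\<forall>\<sigma>\<in>X. \<forall>\<sigma>'\<in>X. set \<sigma> = set \<sigma>' \<longrightarrow> \<sigma> = \<sigma>') \<and>
     (\<forall>\<tau>\<in>X. \<forall>S. S \<noteq> {} \<and> S \<subseteq> set \<tau> \<longrightarrow> (\<exists>\<sigma>\<in>X. set \<sigma> = S))"

definition perm_sign :: "'v list \<Rightarrow> 'v list \<Rightarrow> int" where
  "perm_sign xs ys =
     sign (\<lambda>j. if j < length xs then (THE m. m < length xs \<and> xs ! m = ys ! j) else j)"

text \<open>Signed incidence number [\<sigma>:\<tau>]: if \<sigma> is \<tau> = [v0,...,vn] with v_i removed
  (up to orientation), it is (-1)^i, resp. (-1)^(i+1) if \<sigma> is oppositely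
  oriented; otherwise 0.\<close>
definition incidence :: "'v list \<Rightarrow> 'v list \<Rightarrow> 'a::ring_1" where
  "incidence \<sigma> \<tau> =
     (if length \<tau> = Suc (length \<sigma>) \<and> set \<sigma> \<subseteq> set \<tau> \<and> distinct \<sigma> \<and> distinct \<tau> then
        (let i = (THE i. i < length \<tau> \<and> \<tau> ! i \<notin> set \<sigma>);
             \<sigma>' = take i \<tau> @ drop (Suc i) \<tau>
         in (-1) ^ i * of_int (perm_sign \<sigma>' \<sigma>))
      else 0)"

text \<open>The stalk over \<sigma> is 'a^(n \<sigma>) with its standard inner product; the
  restriction map for a face relation \<sigma> \<le> \<tau> is the (n \<tau> x n \<sigma>)-matrix with
  entries F \<sigma> \<tau> j i.\<close>

definition cellular_sheaf ::
  "'v list set \<Rightarrow> ('v list \<Rightarrow> nat) \<Rightarrow> ('v list \<Rightarrow> 'v list \<Rightarrow> nat \<Rightarrow> nat \<Rightarrow> 'a::ring_1) \<Rightarrow> bool" where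
  "cellular_sheaf X n F \<longleftrightarrow>
     (\<forall>\<sigma>\<in>X. \<forall>j<n \<sigma>. \<forall>i<n \<sigma>. F \<sigma> \<sigma> j i = (if i = j then 1 else 0)) \<and>
     (\<forall>\<rho>\<in>X. \<forall>\<sigma>\<in>X. \<forall>\<tau>\<in>X. set \<rho> \<subseteq> set \<sigma> \<and> set \<sigma> \<subseteq> set \<tau> \<longrightarrow>
        (\<forall>k<n \<tau>. \<forall>i<n \<rho>. F \<rho> \<tau> k i = (\<Sum>j<n \<sigma>. F \<sigma> \<tau> k j * F \<rho> \<sigma> j i)))"

text \<open>Cochains on simplices with k vertices (i.e. of dimension k - 1):
  C^(k-1)(X; S) as functions supported on stalk coordinates of those simplices.\<close>
definition cochains ::
  "'v list set \<Rightarrow> ('v list \<Rightarrow> nat) \<Rightarrow> nat \<Rightarrow> ('v list \<Rightarrow> nat \<Rightarrow> 'a::zero) set" where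
  "cochains X n k = {f. \<forall>\<sigma> i. f \<sigma> i \<noteq> 0 \<longrightarrow> \<sigma> \<in> X \<and> length \<sigma> = k \<and> i < n \<sigma>}"

definition coboundary ::
  "'v list set \<Rightarrow> ('v list \<Rightarrow> nat) \<Rightarrow> ('v list \<Rightarrow> 'v list \<Rightarrow> nat \<Rightarrow> nat \<Rightarrow> 'a::ring_1)
     \<Rightarrow> nat \<Rightarrow> ('v list \<Rightarrow> nat \<Rightarrow> 'a) \<Rightarrow> ('v list \<Rightarrow> nat \<Rightarrow> 'a)" where
  "coboundary X n F k f = (\<lambda>\<tau> j.
     if \<tau> \<in> X \<and> length \<tau> = Suc k \<and> j < n \<tau> then
       (\<Sum>\<sigma>\<in>{\<sigma>\<in>X. length \<sigma> = k}. incidence \<sigma> \<tau> * (\<Sum>i<n \<sigma>. F \<sigma> \<tau> j i * f \<sigma> i))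
     else 0)"

definition cinner ::
  "'v list set \<Rightarrow> ('v list \<Rightarrow> nat) \<Rightarrow> ('v list \<Rightarrow> nat \<Rightarrow> 'a::conjugatable_ring)
     \<Rightarrow> ('v list \<Rightarrow> nat \<Rightarrow> 'a) \<Rightarrow> 'a" where
  "cinner X n f g = (\<Sum>\<sigma>\<in>X. \<Sum>i<n \<sigma>. f \<sigma> i * conjugate (g \<sigma> i))"

definition adjoint_at ::
  "('b \<Rightarrow> 'b \<Rightarrow> 'a) \<Rightarrow> 'b set \<Rightarrow> ('b \<Rightarrow> 'b) \<Rightarrow> 'b \<Rightarrow> 'b" where
  "adjoint_at ip U A x = (THE y. y \<in> U \<and> (\<forall>u\<in>U. ip (A u) x = ip u y))"

definition proj_sub :: "'v list set \<Rightarrow> ('v list \<Rightarrow> nat \<Rightarrow> 'a::zero) \<Rightarrow> ('v list \<Rightarrow> nat \<Rightarrow> 'a)" where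
  "proj_sub Xt f = (\<lambda>\<sigma> i. if \<sigma> \<in> Xt then f \<sigma> i else 0)"

definition cdim :: "('v list \<Rightarrow> nat \<Rightarrow> 'a::field) set \<Rightarrow> nat" where
  "cdim S = vector_space.dim (\<lambda>c f. \<lambda>\<sigma> i. c * f \<sigma> i) S"

text \<open>q-dimensional simplices are those with q+1 vertices.  X is X_(t+p), Xt is X_t,
  (n, F) is the sheaf S_(t+p); its pullback S_t is (n, F) restricted to Xt.\<close>
definition persistent_sheaf_laplacian ::
  "'v list set \<Rightarrow> 'v list set \<Rightarrow> ('v list \<Rightarrow> nat) \<Rightarrow> ('v list \<Rightarrow> 'v list \<Rightarrow> nat \<Rightarrow> nat \<Rightarrow> 'a::conjugatable_field)
     \<Rightarrow> nat \<Rightarrow> ('v list \<Rightarrow> nat \<Rightarrow> 'a) \<Rightarrow> ('v list \<Rightarrow> nat \<Rightarrow> 'a)" where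
  "persistent_sheaf_laplacian X Xt n F q =
     (let ip = cinner X n;
          k = Suc q;
          dstar = adjoint_at ip (cochains X n k) (coboundary X n F k);
          Cpq = {e \<in> cochains X n (Suc k). dstar e \<in> cochains Xt n k};
          eth = adjoint_at ip Cpq dstar;
          eth_star = adjoint_at ip (cochains Xt n k) eth;
          dt_star = adjoint_at ip (cochains Xt n q) (coboundary Xt n F q)
      in (\<lambda>x. eth_star (eth x) + coboundary Xt n F q (dt_star x)))"

text \<open>Dimension of the image of pi^\<bullet> : H^q(X; S) \<rightarrow> H^q(Xt; S_t), where
  H^q(Xt) = Z/B with B = im d^t_(q-1); the image is (pi(Z^q(X)) + B)/B,
  whose dimension is dim(pi(Z^q(X)) + B) - dim B.\<close>
definition cohom_image_dim ::
  "'v list set \<Rightarrow> 'v list set \<Rightarrow> ('v list \<Rightarrow> nat) \<Rightarrow> ('v list \<Rightarrow> 'v list \<Rightarrow> nat \<Rightarrow> nat \<Rightarrow> 'a::field)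
     \<Rightarrow> nat \<Rightarrow> nat" where
  "cohom_image_dim X Xt n F q =
     (let k = Suc q;
          Z = {z \<in> cochains X n k. coboundary X n F k z = 0};
          B = coboundary Xt n F q ` cochains Xt n q
      in cdim {a + b | a b. a \<in> proj_sub Xt ` Z \<and> b \<in> B} - cdim B)"

end

theory Submission
  imports Defs
begin

definition pmap :: "'v list \<Rightarrow> 'v list \<Rightarrow> nat \<Rightarrow> nat" where
  "pmap xs ys = (\<lambda>j. if j < length xs then (THE m. m < length xs \<and> xs ! m = ys ! j) else j)"

definition okp :: "'v list \<Rightarrow> 'v list \<Rightarrow> bool" where
  "okp xs ys \<longleftrightarrow> distinct xs \<and> distinct ys \<and> set xs = set ys"

lemma perm_sign_pmap: "perm_sign xs ys = sign (pmap xs ys)"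
  unfolding perm_sign_def pmap_def ..

lemma okp_len: "okp xs ys \<Longrightarrow> length xs = length ys"
  unfolding okp_def by (metis distinct_card)

lemma the_idx:
  assumes "distinct xs" "m < length xs" "xs ! m = y"
  shows "(THE m. m < length xs \<and> xs ! m = y) = m"
  using assms by (auto intro!: the_equality simp: nth_eq_iff_index_eq)

lemma pmap_nth:
  assumes "okp xs ys" "j < length xs"
  shows "pmap xs ys j < length xs \<and> xs ! (pmap xs ys j) = ys ! j"
proof -
  have l: "length xs = length ys" using okp_len[OF assms(1)] .
  have "ys ! j \<in> set xs" using assms l unfolding okp_def by (metis nth_mem)
  then obtain m where m: "m < length xs" "xs ! m = ys ! j" by (auto simp: in_set_conv_nth)
  then show ?thesis using the_idx[OF _ m] assms unfolding pmap_def okp_def by auto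
qed

lemma pmap_eqI:
  assumes "okp xs ys" "j < length xs" "m < length xs" "xs ! m = ys ! j"
  shows "pmap xs ys j = m"
  using pmap_nth[OF assms(1,2)] assms unfolding okp_def by (metis nth_eq_iff_index_eq)

lemma pmap_permutes:
  assumes "okp xs ys"
  shows "pmap xs ys permutes {..<length xs}"
proof (rule bij_imp_permutes)
  have l: "length xs = length ys" using okp_len[OF assms(1)] .
  have inj: "inj_on (pmap xs ys) {..<length xs}"
  proof
    fix a b assume a: "a \<in> {..<length xs}" and b: "b \<in> {..<length xs}" and e: "pmap xs ys a = pmap xs ys b"
    have "ys ! a = ys ! b" using pmap_nth[OF assms, of a] pmap_nth[OF assms, of b] a b e by auto
    then show "a = b" using assms a b l unfolding okp_def by (simp add: nth_eq_iff_index_eq)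
  qed
  have sub: "pmap xs ys ` {..<length xs} \<subseteq> {..<length xs}" using pmap_nth[OF assms] by auto
  have "pmap xs ys ` {..<length xs} = {..<length xs}"
    using endo_inj_surj[OF _ sub inj] by simp
  then show "bij_betw (pmap xs ys) {..<length xs} {..<length xs}"
    using inj by (simp add: bij_betw_def)
  show "\<And>x. x \<notin> {..<length xs} \<Longrightarrow> pmap xs ys x = x" unfolding pmap_def by auto
qed

lemma pmap_permutation: "okp xs ys \<Longrightarrow> permutation (pmap xs ys)"
  using pmap_permutes permutation_permutes by blast

lemma okp_trans: "okp xs ys \<Longrightarrow> okp ys zs \<Longrightarrow> okp xs zs"
  unfolding okp_def by auto

lemma okp_sym: "okp xs ys \<Longrightarrow> okp ys xs"
  unfolding okp_def by auto

lemma okp_refl: "distinct xs \<Longrightarrow> okp xs xs"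
  unfolding okp_def by auto

lemma pmap_comp:
  assumes "okp xs ys" "okp ys zs"
  shows "pmap xs zs = pmap xs ys \<circ> pmap ys zs"
proof
  fix j
  have l1: "length xs = length ys" using okp_len[OF assms(1)] .
  have l2: "length ys = length zs" using okp_len[OF assms(2)] .
  show "pmap xs zs j = (pmap xs ys \<circ> pmap ys zs) j"
  proof (cases "j < length xs")
    case True
    have 1: "pmap ys zs j < length ys \<and> ys ! pmap ys zs j = zs ! j" using pmap_nth[OF assms(2)] True l1 by auto
    have 2: "pmap xs ys (pmap ys zs j) < length xs \<and> xs ! (pmap xs ys (pmap ys zs j)) = ys ! (pmap ys zs j)"
      using pmap_nth[OF assms(1)] 1 l1 by auto
    show ?thesis using pmap_eqI[OF okp_trans[OF assms] True] 1 2 by auto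
  next
    case False
    then show ?thesis unfolding pmap_def using l1 l2 by auto
  qed
qed

lemma perm_sign_mult:
  assumes "okp xs ys" "okp ys zs"
  shows "perm_sign xs zs = perm_sign xs ys * perm_sign ys zs"
  unfolding perm_sign_pmap pmap_comp[OF assms]
  by (rule sign_compose[OF pmap_permutation[OF assms(1)] pmap_permutation[OF assms(2)]])

lemma perm_sign_refl: "distinct xs \<Longrightarrow> perm_sign xs xs = 1"
proof -
  assume d: "distinct xs"
  have "pmap xs xs = id"
  proof
    fix j show "pmap xs xs j = id j"
      by (cases "j < length xs") (auto simp: pmap_def the_idx[OF d])
  qed
  then show ?thesis by (simp add: perm_sign_pmap)
qed

lemma perm_sign_swap:
  assumes "distinct (a # b # zs)"
  shows "perm_sign (a # b # zs) (b # a # zs) = -1"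
proof -
  have ok: "okp (a # b # zs) (b # a # zs)" using assms unfolding okp_def by auto
  have "pmap (a # b # zs) (b # a # zs) = Transposition.transpose 0 1"
  proof
    fix j show "pmap (a # b # zs) (b # a # zs) j = Transposition.transpose 0 1 j"
    proof (cases "j < length (a # b # zs)")
      case True
      show ?thesis
      proof (cases "j = 0 \<or> j = 1")
        case True
        then show ?thesis using pmap_eqI[OF ok, of j] \<open>j < _\<close> by (auto simp: transpose_def)
      next
        case False
        then obtain j' where j: "j = Suc (Suc j')" by (metis One_nat_def not0_implies_Suc)
        then show ?thesis using pmap_eqI[OF ok, of j j] \<open>j < _\<close> False by (auto simp: transpose_def)
      qed
    next
      case False
      then show ?thesis by (auto simp: pmap_def transpose_def)
    qed
  qed
  then show ?thesis by (simp add: perm_sign_pmap sign_swap_id)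
qed

definition shiftp :: "(nat \<Rightarrow> nat) \<Rightarrow> nat \<Rightarrow> nat" where
  "shiftp p = (\<lambda>j. case j of 0 \<Rightarrow> 0 | Suc j' \<Rightarrow> Suc (p j'))"

lemma shiftp_sign:
  assumes "p permutes S" "finite S"
  shows "permutation (shiftp p) \<and> sign (shiftp p) = sign p"
  using assms
proof (induct rule: permutes_induct)
  case id
  have "shiftp id = id" by (auto simp: shiftp_def fun_eq_iff split: nat.split)
  then show ?case using permutation_id by metis
next
  case (swap a b p)
  have e: "shiftp (Transposition.transpose a b \<circ> p) = Transposition.transpose (Suc a) (Suc b) \<circ> shiftp p"
    by (auto simp: shiftp_def fun_eq_iff transpose_def split: nat.split)
  have pp: "permutation p" using swap(5) assms(2) permutation_permutes by blast
  have pt: "permutation (Transposition.transpose (Suc a) (Suc b))" "permutation (Transposition.transpose a b)"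
    by (simp_all add: permutation_swap_id)
  have 1: "permutation (Transposition.transpose (Suc a) (Suc b) \<circ> shiftp p)"
    using permutation_compose[OF pt(1)] swap(4) by blast
  have 2: "sign (Transposition.transpose (Suc a) (Suc b) \<circ> shiftp p) = sign (Transposition.transpose a b \<circ> p)"
    using sign_compose[OF pt(1), of "shiftp p"] sign_compose[OF pt(2) pp] swap(3,4)
    by (simp add: sign_swap_id)
  show ?case unfolding e using 1 2 by blast
qed

lemma perm_sign_cons:
  assumes "okp xs ys" "a \<notin> set xs"
  shows "perm_sign (a # xs) (a # ys) = perm_sign xs ys"
proof -
  have ok2: "okp (a # xs) (a # ys)" using assms unfolding okp_def by auto
  have l: "length xs = length ys" using okp_len[OF assms(1)] .
  have "pmap (a # xs) (a # ys) = shiftp (pmap xs ys)"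
  proof
    fix j show "pmap (a # xs) (a # ys) j = shiftp (pmap xs ys) j"
    proof (cases j)
      case 0
      then show ?thesis using pmap_eqI[OF ok2, of 0 0] by (simp add: shiftp_def)
    next
      case (Suc j')
      show ?thesis
      proof (cases "j' < length xs")
        case True
        then show ?thesis using pmap_eqI[OF ok2, of j "Suc (pmap xs ys j')"] pmap_nth[OF assms(1) True] Suc
          by (simp add: shiftp_def)
      next
        case False
        then show ?thesis using Suc by (simp add: shiftp_def pmap_def)
      qed
    qed
  qed
  then show ?thesis unfolding perm_sign_pmap
    using shiftp_sign[OF pmap_permutes[OF assms(1)]] by simp
qed

lemma del_props:
  assumes "distinct t" "i < length t"
  shows "distinct (take i t @ drop (Suc i) t) \<and> t ! i \<notin> set (take i t @ drop (Suc i) t)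
     \<and> set t = insert (t ! i) (set (take i t @ drop (Suc i) t))"
proof -
  have e: "t = take i t @ t ! i # drop (Suc i) t" using assms(2) by (rule id_take_nth_drop)
  have "distinct (take i t @ t ! i # drop (Suc i) t)" using assms(1) e by simp
  then have "distinct (take i t @ drop (Suc i) t) \<and> t ! i \<notin> set (take i t @ drop (Suc i) t)" by auto
  moreover have "set t = insert (t ! i) (set (take i t @ drop (Suc i) t))"
    by (subst e) auto
  ultimately show ?thesis by blast
qed

lemma perm_sign_del:
  assumes "distinct t" "i < length t"
  shows "perm_sign t (t ! i # (take i t @ drop (Suc i) t)) = (-1) ^ i"
  using assms
proof (induct t arbitrary: i)
  case Nil then show ?case by simp
next
  case (Cons x t)
  show ?case
  proof (cases i)
    case 0
    then show ?thesis using perm_sign_refl[OF Cons(2)] by simp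
  next
    case (Suc i')
    have d: "distinct t" "x \<notin> set t" using Cons(2) by auto
    have i': "i' < length t" using Cons(3) Suc by simp
    let ?r = "take i' t @ drop (Suc i') t"
    let ?y = "t ! i'"
    have dp: "distinct ?r" "?y \<notin> set ?r" "set t = insert ?y (set ?r)" using del_props[OF d(1) i'] by auto
    have lst: "(x # t) ! i # (take i (x # t) @ drop (Suc i) (x # t)) = ?y # x # ?r" using Suc by simp
    have ok1: "okp (x # t) (x # ?y # ?r)" using dp d unfolding okp_def by auto
    have ok2: "okp (x # ?y # ?r) (?y # x # ?r)" using dp d unfolding okp_def by auto
    have ok3: "okp t (?y # ?r)" using dp d unfolding okp_def by auto
    have "perm_sign (x # t) (?y # x # ?r) = perm_sign (x # t) (x # ?y # ?r) * perm_sign (x # ?y # ?r) (?y # x # ?r)"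
      by (rule perm_sign_mult[OF ok1 ok2])
    also have "perm_sign (x # t) (x # ?y # ?r) = perm_sign t (?y # ?r)"
      by (rule perm_sign_cons[OF ok3 d(2)])
    also have "\<dots> = (-1) ^ i'" using Cons(1)[OF d(1) i'] .
    also have "perm_sign (x # ?y # ?r) (?y # x # ?r) = -1"
      by (rule perm_sign_swap) (use dp d in auto)
    finally show ?thesis unfolding lst using Suc by simp
  qed
qed

lemma codim1:
  assumes "distinct r" "distinct s" "set r \<subseteq> set s" "length s = Suc (length r)"
  shows "\<exists>x. x \<notin> set r \<and> set s = insert x (set r)"
proof -
  have c: "card (set s) = Suc (card (set r))" using assms by (simp add: distinct_card)
  then have "set s - set r \<noteq> {}" using assms(3) by (metis Diff_eq_empty_iff card_seteq finite_set lessI less_irrefl subset_antisym)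
  then obtain x where x: "x \<in> set s" "x \<notin> set r" by auto
  have "insert x (set r) \<subseteq> set s" using x assms(3) by auto
  moreover have "card (insert x (set r)) = card (set s)" using x c by simp
  ultimately have "insert x (set r) = set s" by (simp add: card_subset_eq)
  then show ?thesis using x by auto
qed

lemma inc_char:
  assumes "distinct s" "distinct t" "length t = Suc (length s)" "set s \<subseteq> set t" "v \<in> set t" "v \<notin> set s"
  shows "(incidence s t :: 'a::ring_1) = of_int (perm_sign t (v # s))"
proof -
  obtain x where x: "x \<notin> set s" "set t = insert x (set s)" using codim1[OF assms(1,2,4,3)] by blast
  have xv: "x = v" using x assms(5,6) by auto
  obtain i0 where i0: "i0 < length t" "t ! i0 = v" using assms(5) by (metis in_set_conv_nth)
  have th: "(THE i. i < length t \<and> t ! i \<notin> set s) = i0"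
  proof (rule the_equality)
    show "i0 < length t \<and> t ! i0 \<notin> set s" using i0 assms(6) by simp
    fix i assume "i < length t \<and> t ! i \<notin> set s"
    then have "t ! i = v" using x xv by (metis insertE nth_mem)
    then show "i = i0" using i0 assms(2) \<open>i < length t \<and> _\<close> by (metis nth_eq_iff_index_eq)
  qed
  let ?s' = "take i0 t @ drop (Suc i0) t"
  have dp: "distinct ?s'" "v \<notin> set ?s'" "set t = insert v (set ?s')" using del_props[OF assms(2) i0(1)] i0(2) by auto
  have ss: "set ?s' = set s" using dp(2,3) x xv assms(6) by (metis insert_ident)
  have ok1: "okp t (v # ?s')" using dp assms unfolding okp_def by auto
  have ok2: "okp ?s' s" using dp ss assms unfolding okp_def by auto
  have ok2': "okp (v # ?s') (v # s)" using dp ss assms unfolding okp_def by auto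
  have "perm_sign t (v # s) = perm_sign t (v # ?s') * perm_sign (v # ?s') (v # s)"
    by (rule perm_sign_mult[OF ok1 ok2'])
  also have "perm_sign (v # ?s') (v # s) = perm_sign ?s' s" by (rule perm_sign_cons[OF ok2 dp(2)])
  also have "perm_sign t (v # ?s') = (-1) ^ i0" using perm_sign_del[OF assms(2) i0(1)] i0(2) by simp
  finally have e: "perm_sign t (v # s) = (-1) ^ i0 * perm_sign ?s' s" .
  have "(incidence s t :: 'a) = (-1) ^ i0 * of_int (perm_sign ?s' s)"
    unfolding incidence_def using assms th by (simp add: Let_def)
  then show ?thesis unfolding e by simp
qed

lemma inc_nz:
  assumes "incidence s t \<noteq> (0::'a::ring_1)"
  shows "length t = Suc (length s) \<and> set s \<subseteq> set t \<and> distinct s \<and> distinct t"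
  using assms unfolding incidence_def by (auto split: if_splits)

lemma inc_sq:
  assumes X: "oriented_complex X" and r: "r \<in> X" and t: "t \<in> X"
  shows "(\<Sum>s\<in>{s\<in>X. length s = m}. (incidence s t :: 'a::ring_1) * incidence r s) = 0"
proof (cases "\<forall>s\<in>{s\<in>X. length s = m}. (incidence s t :: 'a) * incidence r s = 0")
  case True
  then show ?thesis by simp
next
  case False
  then obtain s1 where s1: "s1 \<in> X" "length s1 = m" "(incidence s1 t :: 'a) * incidence r s1 \<noteq> 0" by auto
  have A: "length t = Suc (length s1) \<and> set s1 \<subseteq> set t \<and> distinct s1 \<and> distinct t"
    using inc_nz[of s1 t] s1(3) by (metis mult_zero_left)
  have B: "length s1 = Suc (length r) \<and> set r \<subseteq> set s1 \<and> distinct r \<and> distinct s1"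
    using inc_nz[of r s1] s1(3) by (metis mult_zero_right)
  obtain w where w: "w \<notin> set r" "set s1 = insert w (set r)" using codim1[of r s1] B by blast
  obtain v where v: "v \<notin> set s1" "set t = insert v (set s1)" using codim1[of s1 t] A by blast
  have vw: "v \<noteq> w" "v \<notin> set r" using v w by auto
  have Xfin: "finite X" and Xd: "\<forall>s\<in>X. s \<noteq> [] \<and> distinct s"
    and Xu: "\<forall>s\<in>X. \<forall>s'\<in>X. set s = set s' \<longrightarrow> s = s'"
    and Xc: "\<forall>t\<in>X. \<forall>S. S \<noteq> {} \<and> S \<subseteq> set t \<longrightarrow> (\<exists>s\<in>X. set s = S)"
    using X unfolding oriented_complex_def by auto
  obtain s2 where s2: "s2 \<in> X" "set s2 = insert v (set r)"
    using Xc t v w by (metis insert_not_empty insert_mono insert_commute subset_insertI)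
  have d2: "distinct s2" using Xd s2 by auto
  have l2: "length s2 = m" using d2 s2 B vw s1(2) by (metis distinct_card card_insert_disjoint finite_set)
  have s12: "s1 \<noteq> s2" using s2 v by auto
  have sub: "\<forall>s\<in>{s\<in>X. length s = m} - {s1, s2}. (incidence s t :: 'a) * incidence r s = 0"
  proof
    fix s assume s: "s \<in> {s\<in>X. length s = m} - {s1, s2}"
    show "(incidence s t :: 'a) * incidence r s = 0"
    proof (rule ccontr)
      assume nz: "(incidence s t :: 'a) * incidence r s \<noteq> 0"
      have A': "length t = Suc (length s) \<and> set s \<subseteq> set t \<and> distinct s \<and> distinct t"
        using inc_nz[of s t] nz by (metis mult_zero_left)
      have B': "length s = Suc (length r) \<and> set r \<subseteq> set s \<and> distinct r \<and> distinct s"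
        using inc_nz[of r s] nz by (metis mult_zero_right)
      obtain x where x: "x \<notin> set r" "set s = insert x (set r)" using codim1[of r s] B' by blast
      have "x = v \<or> x = w" using x A' v w by auto
      then have "set s = set s1 \<or> set s = set s2" using x w s2 by auto
      then show False using Xu s s1 s2 by auto
    qed
  qed
  have "(\<Sum>s\<in>{s\<in>X. length s = m}. (incidence s t :: 'a) * incidence r s)
      = (\<Sum>s\<in>{s1, s2}. (incidence s t :: 'a) * incidence r s)"
    by (rule sum.mono_neutral_right) (use Xfin s1 s2 l2 sub in auto)
  also have "\<dots> = incidence s1 t * incidence r s1 + incidence s2 t * incidence r s2" using s12 by simp
  also have "incidence s1 t * incidence r s1 = (of_int (perm_sign t (v # s1) * perm_sign s1 (w # r)) :: 'a)"
    using inc_char[of s1 t v, where 'a='a] inc_char[of r s1 w, where 'a='a] A B v w by simp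
  also have "incidence s2 t * incidence r s2 = (of_int (perm_sign t (w # s2) * perm_sign s2 (v # r)) :: 'a)"
  proof -
    have "set r \<subseteq> set s2" using s2 by auto
    then show ?thesis
    using inc_char[of s2 t w, where 'a='a] inc_char[of r s2 v, where 'a='a] A B v w vw s2 d2 l2 s1(2) by auto
  qed
  also have "perm_sign t (v # s1) * perm_sign s1 (w # r) = perm_sign t (v # w # r)"
  proof -
    have o1: "okp t (v # s1)" "okp (v # s1) (v # w # r)" "okp s1 (w # r)" using A B v w vw unfolding okp_def by auto
    show ?thesis using perm_sign_mult[OF o1(1,2)] perm_sign_cons[OF o1(3) v(1)] by simp
  qed
  also have "perm_sign t (w # s2) * perm_sign s2 (v # r) = perm_sign t (w # v # r)"
  proof -
    have o1: "okp t (w # s2)" "okp (w # s2) (w # v # r)" "okp s2 (v # r)" "w \<notin> set s2"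
      using A B v w vw s2 d2 unfolding okp_def by auto
    show ?thesis using perm_sign_mult[OF o1(1,2)] perm_sign_cons[OF o1(3,4)] by simp
  qed
  also have "perm_sign t (w # v # r) = - perm_sign t (v # w # r)"
  proof -
    have o1: "okp t (v # w # r)" "okp (v # w # r) (w # v # r)" using A B v w vw unfolding okp_def by auto
    have "perm_sign (v # w # r) (w # v # r) = -1" by (rule perm_sign_swap) (use B vw w in auto)
    then show ?thesis using perm_sign_mult[OF o1] by simp
  qed
  finally show ?thesis by simp
qed



interpretation cv: vector_space "(\<lambda>c f \<sigma> i. c * f \<sigma> i) :: 'a::field \<Rightarrow> ('v list \<Rightarrow> nat \<Rightarrow> 'a) \<Rightarrow> ('v list \<Rightarrow> nat \<Rightarrow> 'a)"
  by unfold_locales (auto simp: fun_eq_iff algebra_simps)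

lemma cdim_cv: "cdim S = cv.dim S" unfolding cdim_def ..

definition suppA :: "'v list set \<Rightarrow> ('v list \<Rightarrow> nat) \<Rightarrow> ('v list \<Rightarrow> nat \<Rightarrow> 'a::field) set" where
  "suppA X n = {f. \<forall>\<sigma> i. \<not> (\<sigma> \<in> X \<and> i < n \<sigma>) \<longrightarrow> f \<sigma> i = 0}"

lemma subspace_suppA: "cv.subspace (suppA X n)"
  unfolding cv.subspace_def suppA_def by auto

lemma add_nz: "a + b \<noteq> 0 \<Longrightarrow> a \<noteq> 0 \<or> b \<noteq> (0::'a::monoid_add)"
  by auto

lemma subspace_cochains: "cv.subspace (cochains X n k :: ('v list \<Rightarrow> nat \<Rightarrow> 'a::field) set)"
  unfolding cv.subspace_def cochains_def by (auto dest!: add_nz)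

lemma cochains_suppA: "Y \<subseteq> X \<Longrightarrow> cochains Y n k \<subseteq> suppA X n"
  unfolding cochains_def suppA_def by auto

lemma sum_fun_apply2: "(\<Sum>x\<in>S. g x) \<sigma> i = (\<Sum>x\<in>S. g x \<sigma> i)"
  by (induct S rule: infinite_finite_induct) auto

lemma suppA_findim:
  assumes "finite X"
  shows "\<exists>E. finite E \<and> (suppA X n :: ('v list \<Rightarrow> nat \<Rightarrow> 'a::field) set) \<subseteq> cv.span E"
proof -
  define Idx where "Idx = (SIGMA \<sigma>:X. {..<n \<sigma>})"
  define e :: "'v list \<times> nat \<Rightarrow> 'v list \<Rightarrow> nat \<Rightarrow> 'a" where "e = (\<lambda>p \<sigma>' i'. if \<sigma>' = fst p \<and> i' = snd p then 1 else 0)"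
  have fI: "finite Idx" unfolding Idx_def using assms by auto
  have "suppA X n \<subseteq> cv.span (e ` Idx)"
  proof
    fix f :: "'v list \<Rightarrow> nat \<Rightarrow> 'a" assume f: "f \<in> suppA X n"
    have eq: "f = (\<Sum>p\<in>Idx. (\<lambda>\<sigma> i. f (fst p) (snd p) * e p \<sigma> i))"
    proof (intro ext)
      fix \<sigma> i
      have "(\<Sum>p\<in>Idx. (\<lambda>\<sigma> i. f (fst p) (snd p) * e p \<sigma> i)) \<sigma> i = (\<Sum>p\<in>Idx. f (fst p) (snd p) * e p \<sigma> i)"
        by (rule sum_fun_apply2)
      also have "\<dots> = (\<Sum>p\<in>Idx. if p = (\<sigma>, i) then f \<sigma> i else 0)"
        by (rule sum.cong) (auto simp: e_def)
      also have "\<dots> = f \<sigma> i" using f fI unfolding suppA_def Idx_def by auto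
      finally show "f \<sigma> i = (\<Sum>p\<in>Idx. (\<lambda>\<sigma> i. f (fst p) (snd p) * e p \<sigma> i)) \<sigma> i" by simp
    qed
    show "f \<in> cv.span (e ` Idx)"
      by (subst eq, rule cv.span_sum, rule cv.span_scale, rule cv.span_base) auto
  qed
  then show ?thesis using fI by blast
qed

lemma subspace_basis:
  fixes U :: "('v list \<Rightarrow> nat \<Rightarrow> 'a::field) set"
  assumes "finite X" "cv.subspace U" "U \<subseteq> suppA X n"
  shows "\<exists>Bs. finite Bs \<and> Bs \<subseteq> U \<and> cv.independent Bs \<and> cv.span Bs = U"
proof -
  obtain Bs where Bs: "Bs \<subseteq> U" "cv.independent Bs" "U \<subseteq> cv.span Bs" "card Bs = cv.dim U"
    using cv.basis_exists by blast
  obtain E where E: "finite E" "(suppA X n :: ('v list \<Rightarrow> nat \<Rightarrow> 'a) set) \<subseteq> cv.span E" using suppA_findim[OF assms(1)] by blast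
  have "Bs \<subseteq> cv.span E" using Bs(1) assms(3) E(2) by blast
  then have "finite Bs" using cv.independent_span_bound[of E Bs] E(1) Bs(2) by blast
  moreover have "cv.span Bs = U" using cv.span_subspace[OF Bs(1) Bs(3) assms(2)] .
  ultimately show ?thesis using Bs by blast
qed

section \<open>inner product\<close>

lemma ip_add_left: "cinner X n (f + g) h = cinner X n f h + cinner X n g h"
  unfolding cinner_def by (simp add: distrib_right sum.distrib)

lemma ip_add_right: "cinner X n h (f + g) = cinner X n h f + cinner X n h g"
  unfolding cinner_def by (simp add: conjugate_dist_add distrib_left sum.distrib)

lemma ip_scale_left: "cinner X n (\<lambda>\<sigma> i. c * f \<sigma> i) g = c * cinner X n f g"
  unfolding cinner_def by (simp add: sum_distrib_left mult.assoc)

lemma ip_scale_right: "cinner X n g (\<lambda>\<sigma> i. c * f \<sigma> i) = conjugate c * cinner X n g (f :: 'v list \<Rightarrow> nat \<Rightarrow> 'a::conjugatable_field)"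
  unfolding cinner_def
  by (simp add: sum_distrib_left conjugate_dist_mul, intro sum.cong refl, simp add: algebra_simps)

lemma ip_zero_left[simp]: "cinner X n 0 g = 0"
  unfolding cinner_def by simp

lemma ip_zero_right[simp]: "cinner X n g 0 = 0"
  unfolding cinner_def by simp

lemma ip_diff_left: "cinner X n (f - g) h = cinner X n f h - cinner X n g h"
  unfolding cinner_def by (simp add: left_diff_distrib sum_subtractf)

lemma conjugate_diff: "conjugate (a - b) = conjugate a - (conjugate b :: 'a::conjugatable_ring)"
  by (metis conjugate_dist_add conjugate_neg diff_conv_add_uminus)

lemma ip_diff_right: "cinner X n h (f - g) = cinner X n h f - cinner X n h g"
  unfolding cinner_def by (simp add: conjugate_diff right_diff_distrib sum_subtractf)

lemma ip_conj: "finite X \<Longrightarrow> conjugate (cinner X n f g) = cinner X n g (f :: 'v list \<Rightarrow> nat \<Rightarrow> 'a::conjugatable_field)"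
  unfolding cinner_def
  by (simp add: sum_conjugate conjugate_dist_mul, intro sum.cong refl, simp add: mult.commute)

lemma ip_self_nonneg: "cinner X n f f \<ge> (0::'a::conjugatable_ordered_field)"
  unfolding cinner_def by (intro sum_nonneg conjugate_square_positive)

lemma ip_self_zero:
  fixes f :: "'v list \<Rightarrow> nat \<Rightarrow> 'a::conjugatable_ordered_field"
  assumes "finite X" "f \<in> suppA X n" "cinner X n f f = 0"
  shows "f = 0"
proof (intro ext)
  fix \<sigma> i
  have nn: "\<And>\<sigma>. 0 \<le> (\<Sum>i<n \<sigma>. f \<sigma> i * conjugate (f \<sigma> i))"
    by (intro sum_nonneg conjugate_square_positive)
  have h: "\<forall>\<sigma>\<in>X. (\<Sum>i<n \<sigma>. f \<sigma> i * conjugate (f \<sigma> i)) = 0"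
    using sum_nonneg_eq_0_iff[OF assms(1), of "\<lambda>\<sigma>. (\<Sum>i<n \<sigma>. f \<sigma> i * conjugate (f \<sigma> i))"] nn assms(3)
    unfolding cinner_def by blast
  show "f \<sigma> i = 0 \<sigma> i"
  proof (cases "\<sigma> \<in> X \<and> i < n \<sigma>")
    case True
    then have "(\<Sum>i<n \<sigma>. f \<sigma> i * conjugate (f \<sigma> i)) = 0" using h by auto
    then have "f \<sigma> i * conjugate (f \<sigma> i) = 0"
      using sum_nonneg_eq_0_iff[of "{..<n \<sigma>}" "\<lambda>i. f \<sigma> i * conjugate (f \<sigma> i)"] conjugate_square_positive True by blast
    then show ?thesis by simp
  next
    case False
    then show ?thesis using assms(2) unfolding suppA_def by simp
  qed
qed

lemma ip_uniq:
  fixes y y' :: "'v list \<Rightarrow> nat \<Rightarrow> 'a::conjugatable_ordered_field"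
  assumes "finite X" "cv.subspace U" "U \<subseteq> suppA X n" "y \<in> U" "y' \<in> U"
    "\<forall>u\<in>U. cinner X n u y = cinner X n u y'"
  shows "y = y'"
proof -
  have d: "y - y' \<in> U" using assms(2,4,5) cv.subspace_diff by blast
  have "cinner X n (y - y') (y - y') = 0" using assms(6) d by (simp add: ip_diff_right)
  then have "y - y' = 0" using ip_self_zero[OF assms(1)] d assms(3) by blast
  then show ?thesis by simp
qed

lemma adjoint_at_eq:
  fixes y :: "'v list \<Rightarrow> nat \<Rightarrow> 'a::conjugatable_ordered_field"
  assumes "finite X" "cv.subspace U" "U \<subseteq> suppA X n" "y \<in> U"
    "\<forall>u\<in>U. cinner X n (A u) x = cinner X n u y"
  shows "adjoint_at (cinner X n) U A x = y"
  unfolding adjoint_at_def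
proof (rule the_equality)
  show "y \<in> U \<and> (\<forall>u\<in>U. cinner X n (A u) x = cinner X n u y)" using assms by blast
  fix y' assume "y' \<in> U \<and> (\<forall>u\<in>U. cinner X n (A u) x = cinner X n u y')"
  then have y'U: "y' \<in> U" and e: "\<And>u. u \<in> U \<Longrightarrow> cinner X n (A u) x = cinner X n u y'" by blast+
  have "\<forall>u\<in>U. cinner X n u y' = cinner X n u y" using e assms(5) by metis
  then show "y' = y" by (rule ip_uniq[OF assms(1,2,3) y'U assms(4)])
qed


section \<open>projection\<close>

lemma proj_span:
  fixes Bs :: "('v list \<Rightarrow> nat \<Rightarrow> 'a::conjugatable_ordered_field) set"
  assumes "finite X" "finite Bs" "Bs \<subseteq> suppA X n"
  shows "\<forall>x. \<exists>p\<in>cv.span Bs. \<forall>u\<in>cv.span Bs. cinner X n u (x - p) = 0"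
  using assms(2,3)
proof (induct Bs rule: finite_induct)
  case empty
  then show ?case by (auto simp: cinner_def)
next
  case (insert b Bs)
  have IH: "\<forall>x. \<exists>p\<in>cv.span Bs. \<forall>u\<in>cv.span Bs. cinner X n u (x - p) = 0" using insert.hyps(3) insert.prems by blast
  have spA: "cv.span Bs \<subseteq> suppA X n" using insert(4) cv.span_minimal[OF _ subspace_suppA] by auto
  obtain pb where pb: "pb \<in> cv.span Bs" "\<forall>u\<in>cv.span Bs. cinner X n u (b - pb) = 0" using IH by blast
  define c where "c = b - pb"
  have cA: "c \<in> suppA X n" unfolding c_def using insert(4) pb(1) spA subspace_suppA cv.subspace_diff by blast
  have pbs: "pb \<in> cv.span (insert b Bs)" using pb(1) cv.span_mono[of Bs "insert b Bs"] by blast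
  have bs: "b \<in> cv.span (insert b Bs)" by (rule cv.span_base) simp
  have cspan: "c \<in> cv.span (insert b Bs)" unfolding c_def using cv.span_diff[OF bs pbs] .
  show ?case
  proof (cases "cinner X n c c = 0")
    case True
    then have "c = 0" using ip_self_zero[OF assms(1) cA] by blast
    then have "b \<in> cv.span Bs" using pb(1) unfolding c_def by simp
    then have e: "cv.span (insert b Bs) = cv.span Bs" by (rule cv.span_redundant)
    show ?thesis unfolding e by (rule IH)
  next
    case False
    show ?thesis
    proof
      fix x
      obtain px where px: "px \<in> cv.span Bs" "\<forall>u\<in>cv.span Bs. cinner X n u (x - px) = 0" using IH by blast
      define \<alpha> where "\<alpha> = conjugate (cinner X n c x / cinner X n c c)"
      define p where "p = px + (\<lambda>\<sigma> i. \<alpha> * c \<sigma> i)"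
      have pin: "p \<in> cv.span (insert b Bs)" unfolding p_def
        by (intro cv.span_add cv.span_scale cspan) (auto intro: cv.span_mono[of Bs "insert b Bs", THEN subsetD] px(1))
      have c_perp: "\<forall>u\<in>cv.span Bs. cinner X n u c = 0" using pb(2) unfolding c_def by blast
      have cpx: "cinner X n c px = 0" using c_perp px(1) ip_conj[OF assms(1), of n px c] by simp
      have ca: "conjugate \<alpha> = cinner X n c x / cinner X n c c" unfolding \<alpha>_def by simp
      have "\<forall>u\<in>cv.span (insert b Bs). cinner X n u (x - p) = 0"
      proof
        fix u assume u: "u \<in> cv.span (insert b Bs)"
        then obtain k where k: "u - (\<lambda>\<sigma> i. k * b \<sigma> i) \<in> cv.span Bs" using cv.span_breakdown_eq by blast
        define u1 where "u1 = u - (\<lambda>\<sigma> i. k * b \<sigma> i) + (\<lambda>\<sigma> i. k * pb \<sigma> i)"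
        have u1: "u1 \<in> cv.span Bs" unfolding u1_def by (intro cv.span_add cv.span_scale k pb(1))
        have ueq: "u = u1 + (\<lambda>\<sigma> i. k * c \<sigma> i)" unfolding u1_def c_def by (auto simp: fun_eq_iff algebra_simps)
        have 1: "cinner X n u1 (x - p) = 0"
          unfolding p_def using px(2) u1 c_perp by (simp add: ip_diff_right ip_add_right ip_scale_right diff_add_eq_diff_diff_swap)
        have 2: "cinner X n c (x - p) = 0"
          unfolding p_def using cpx False ca by (simp add: ip_diff_right ip_add_right ip_scale_right)
        show "cinner X n u (x - p) = 0" unfolding ueq using 1 2 by (simp add: ip_add_left ip_scale_left)
      qed
      then show "\<exists>p\<in>cv.span (insert b Bs). \<forall>u\<in>cv.span (insert b Bs). cinner X n u (x - p) = 0" using pin by blast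
    qed
  qed
qed

lemma proj_exists:
  fixes U :: "('v list \<Rightarrow> nat \<Rightarrow> 'a::conjugatable_ordered_field) set"
  assumes "finite X" "cv.subspace U" "U \<subseteq> suppA X n"
  shows "\<exists>p\<in>U. \<forall>u\<in>U. cinner X n u (x - p) = 0"
proof -
  obtain Bs where Bs: "finite Bs" "Bs \<subseteq> U" "cv.span Bs = U" using subspace_basis[OF assms] by blast
  show ?thesis using proj_span[OF assms(1) Bs(1)] Bs assms(3) by auto
qed



lemma sum4_swap:
  "(\<Sum>a\<in>A. \<Sum>b\<in>B a. \<Sum>c\<in>C. \<Sum>d\<in>D c. G a b c d) = (\<Sum>c\<in>C. \<Sum>d\<in>D c. \<Sum>a\<in>A. \<Sum>b\<in>B a. G a b c d)"
proof -
  have "(\<Sum>a\<in>A. \<Sum>b\<in>B a. \<Sum>c\<in>C. \<Sum>d\<in>D c. G a b c d) = (\<Sum>a\<in>A. \<Sum>c\<in>C. \<Sum>b\<in>B a. \<Sum>d\<in>D c. G a b c d)"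
    by (rule sum.cong[OF refl], rule sum.swap)
  also have "\<dots> = (\<Sum>c\<in>C. \<Sum>a\<in>A. \<Sum>b\<in>B a. \<Sum>d\<in>D c. G a b c d)" by (rule sum.swap)
  also have "\<dots> = (\<Sum>c\<in>C. \<Sum>a\<in>A. \<Sum>d\<in>D c. \<Sum>b\<in>B a. G a b c d)"
    by (rule sum.cong[OF refl], rule sum.cong[OF refl], rule sum.swap)
  also have "\<dots> = (\<Sum>c\<in>C. \<Sum>d\<in>D c. \<Sum>a\<in>A. \<Sum>b\<in>B a. G a b c d)"
    by (rule sum.cong[OF refl], rule sum.swap)
  finally show ?thesis .
qed

definition cobstar ::
  "'v list set \<Rightarrow> ('v list \<Rightarrow> nat) \<Rightarrow> ('v list \<Rightarrow> 'v list \<Rightarrow> nat \<Rightarrow> nat \<Rightarrow> 'a::conjugatable_field)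
     \<Rightarrow> nat \<Rightarrow> ('v list \<Rightarrow> nat \<Rightarrow> 'a) \<Rightarrow> ('v list \<Rightarrow> nat \<Rightarrow> 'a)" where
  "cobstar Y n F m e = (\<lambda>\<sigma> i.
     if \<sigma> \<in> Y \<and> length \<sigma> = m \<and> i < n \<sigma> then
       (\<Sum>\<tau>\<in>{\<tau>\<in>Y. length \<tau> = Suc m}. \<Sum>j<n \<tau>. conjugate (incidence \<sigma> \<tau> * F \<sigma> \<tau> j i) * e \<tau> j)
     else 0)"

lemma cob_in: "coboundary Y n F m f \<in> cochains Y n (Suc m)"
  unfolding coboundary_def cochains_def by auto

lemma cobstar_in: "cobstar Y n F m e \<in> cochains Y n m"
  unfolding cobstar_def cochains_def by auto

lemma cob_add: "coboundary Y n F m (f + g) = coboundary Y n F m f + coboundary Y n F m (g :: 'v list \<Rightarrow> nat \<Rightarrow> 'a::field)"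
  unfolding coboundary_def by (auto simp: fun_eq_iff distrib_left sum.distrib)

lemma cob_diff: "coboundary Y n F m (f - g) = coboundary Y n F m f - coboundary Y n F m (g :: 'v list \<Rightarrow> nat \<Rightarrow> 'a::field)"
  unfolding coboundary_def by (auto simp: fun_eq_iff right_diff_distrib sum_subtractf)

lemma cob_scale: "coboundary Y n F m (\<lambda>\<sigma> i. c * f \<sigma> i) = (\<lambda>\<sigma> i. c * coboundary Y n F m (f :: 'v list \<Rightarrow> nat \<Rightarrow> 'a::field) \<sigma> i)"
  unfolding coboundary_def by (auto simp: fun_eq_iff sum_distrib_left mult.left_commute)

lemma cob_zero: "coboundary Y n F m (0 :: 'v list \<Rightarrow> nat \<Rightarrow> 'a::field) = 0"
  unfolding coboundary_def by (auto simp: fun_eq_iff)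

lemma cobstar_add: "cobstar Y n F m (f + g) = cobstar Y n F m f + cobstar Y n F m (g :: 'v list \<Rightarrow> nat \<Rightarrow> 'a::conjugatable_field)"
  unfolding cobstar_def by (auto simp: fun_eq_iff distrib_left sum.distrib)

lemma cobstar_scale: "cobstar Y n F m (\<lambda>\<sigma> i. c * f \<sigma> i) = (\<lambda>\<sigma> i. c * cobstar Y n F m (f :: 'v list \<Rightarrow> nat \<Rightarrow> 'a::conjugatable_field) \<sigma> i)"
  unfolding cobstar_def by (auto simp: fun_eq_iff sum_distrib_left mult.left_commute)

lemma cobstar_zero: "cobstar Y n F m (0 :: 'v list \<Rightarrow> nat \<Rightarrow> 'a::conjugatable_field) = 0"
  unfolding cobstar_def by (auto simp: fun_eq_iff)

lemma adj_cob:
  fixes u e :: "'v list \<Rightarrow> nat \<Rightarrow> 'a::conjugatable_field"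
  assumes X: "finite X" and YX: "Y \<subseteq> X" and u: "u \<in> cochains Y n m"
  shows "cinner X n (coboundary Y n F m u) e = cinner X n u (cobstar Y n F m e)"
proof -
  define Ym where "Ym = {\<sigma>\<in>Y. length \<sigma> = m}"
  define Y1 where "Y1 = {\<tau>\<in>Y. length \<tau> = Suc m}"
  have fY: "finite Y" using X YX finite_subset by blast
  have sub1: "Y1 \<subseteq> X" "Ym \<subseteq> X" using YX unfolding Y1_def Ym_def by auto
  have "cinner X n (coboundary Y n F m u) e
      = (\<Sum>\<tau>\<in>Y1. \<Sum>j<n \<tau>. coboundary Y n F m u \<tau> j * conjugate (e \<tau> j))"
    unfolding cinner_def
  proof (rule sum.mono_neutral_right[OF X sub1(1)])
    show "\<forall>\<tau>\<in>X - Y1. (\<Sum>j<n \<tau>. coboundary Y n F m u \<tau> j * conjugate (e \<tau> j)) = 0"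
    proof
      fix \<tau> assume "\<tau> \<in> X - Y1"
      then have "\<not> (\<tau> \<in> Y \<and> length \<tau> = Suc m)" unfolding Y1_def by auto
      then have "\<forall>j. coboundary Y n F m u \<tau> j = 0" unfolding coboundary_def by auto
      then show "(\<Sum>j<n \<tau>. coboundary Y n F m u \<tau> j * conjugate (e \<tau> j)) = 0" by simp
    qed
  qed
  also have "\<dots> = (\<Sum>\<tau>\<in>Y1. \<Sum>j<n \<tau>. \<Sum>\<sigma>\<in>Ym. \<Sum>i<n \<sigma>. u \<sigma> i * (incidence \<sigma> \<tau> * F \<sigma> \<tau> j i) * conjugate (e \<tau> j))"
    by (intro sum.cong refl) (auto simp: Y1_def Ym_def coboundary_def sum_distrib_left sum_distrib_right mult_ac)
  also have "\<dots> = (\<Sum>\<sigma>\<in>Ym. \<Sum>i<n \<sigma>. \<Sum>\<tau>\<in>Y1. \<Sum>j<n \<tau>. u \<sigma> i * (incidence \<sigma> \<tau> * F \<sigma> \<tau> j i) * conjugate (e \<tau> j))"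
    by (rule sum4_swap)
  also have "\<dots> = (\<Sum>\<sigma>\<in>Ym. \<Sum>i<n \<sigma>. u \<sigma> i * conjugate (cobstar Y n F m e \<sigma> i))"
  proof (intro sum.cong refl)
    fix \<sigma> i assume s: "\<sigma> \<in> Ym" and i: "i \<in> {..<n \<sigma>}"
    have fY1: "finite Y1" using fY unfolding Y1_def by auto
    have "conjugate (cobstar Y n F m e \<sigma> i) = (\<Sum>\<tau>\<in>Y1. \<Sum>j<n \<tau>. (incidence \<sigma> \<tau> * F \<sigma> \<tau> j i) * conjugate (e \<tau> j))"
      using s i fY1 unfolding cobstar_def Ym_def Y1_def[symmetric]
      by (simp add: sum_conjugate conjugate_dist_mul)
    then show "(\<Sum>\<tau>\<in>Y1. \<Sum>j<n \<tau>. u \<sigma> i * (incidence \<sigma> \<tau> * F \<sigma> \<tau> j i) * conjugate (e \<tau> j)) = u \<sigma> i * conjugate (cobstar Y n F m e \<sigma> i)"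
      by (simp add: sum_distrib_left mult.assoc)
  qed
  also have "\<dots> = cinner X n u (cobstar Y n F m e)"
    unfolding cinner_def
  proof (rule sum.mono_neutral_left[OF X sub1(2)])
    show "\<forall>\<sigma>\<in>X - Ym. (\<Sum>i<n \<sigma>. u \<sigma> i * conjugate (cobstar Y n F m e \<sigma> i)) = 0"
    proof
      fix \<sigma> assume "\<sigma> \<in> X - Ym"
      then have "\<not> (\<sigma> \<in> Y \<and> length \<sigma> = m)" unfolding Ym_def by auto
      then have "\<forall>i. u \<sigma> i = 0" using u unfolding cochains_def by auto
      then show "(\<Sum>i<n \<sigma>. u \<sigma> i * conjugate (cobstar Y n F m e \<sigma> i)) = 0" by simp
    qed
  qed
  finally show ?thesis .
qed

lemma adjoint_cob:
  fixes e :: "'v list \<Rightarrow> nat \<Rightarrow> 'a::conjugatable_ordered_field"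
  assumes X: "finite X" and YX: "Y \<subseteq> X"
  shows "adjoint_at (cinner X n) (cochains Y n m) (coboundary Y n F m) e = cobstar Y n F m e"
  by (rule adjoint_at_eq[OF X subspace_cochains cochains_suppA[OF YX] cobstar_in])
     (use adj_cob[OF X YX] in blast)

lemma cob_cob:
  fixes c :: "'v list \<Rightarrow> nat \<Rightarrow> 'a::field"
  assumes X: "oriented_complex X" and S: "cellular_sheaf X n F"
  shows "coboundary X n F (Suc m) (coboundary X n F m c) = 0"
proof (intro ext)
  fix t j
  define X0 where "X0 = {\<rho>\<in>X. length \<rho> = m}"
  define X1 where "X1 = {\<sigma>\<in>X. length \<sigma> = Suc m}"
  show "coboundary X n F (Suc m) (coboundary X n F m c) t j = 0 t j"
  proof (cases "t \<in> X \<and> length t = Suc (Suc m) \<and> j < n t")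
    case False
    then show ?thesis unfolding coboundary_def by auto
  next
    case True
    have funct: "\<And>\<rho> \<sigma> i. \<rho> \<in> X \<Longrightarrow> \<sigma> \<in> X \<Longrightarrow> i < n \<rho> \<Longrightarrow> (incidence \<sigma> t :: 'a) * incidence \<rho> \<sigma> \<noteq> 0 \<Longrightarrow>
        (\<Sum>l<n \<sigma>. F \<sigma> t j l * F \<rho> \<sigma> l i) = F \<rho> t j i"
    proof -
      fix \<rho> \<sigma> i assume a: "\<rho> \<in> X" "\<sigma> \<in> X" "i < n \<rho>" "(incidence \<sigma> t :: 'a) * incidence \<rho> \<sigma> \<noteq> 0"
      have "set \<sigma> \<subseteq> set t" using inc_nz[of \<sigma> t] a(4) by (metis mult_zero_left)
      moreover have "set \<rho> \<subseteq> set \<sigma>" using inc_nz[of \<rho> \<sigma>] a(4) by (metis mult_zero_right)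
      moreover have comp: "\<forall>\<rho>\<in>X. \<forall>\<sigma>\<in>X. \<forall>\<tau>\<in>X. set \<rho> \<subseteq> set \<sigma> \<and> set \<sigma> \<subseteq> set \<tau> \<longrightarrow>
        (\<forall>k<n \<tau>. \<forall>i<n \<rho>. F \<rho> \<tau> k i = (\<Sum>j<n \<sigma>. F \<sigma> \<tau> k j * F \<rho> \<sigma> j i))"
        using S unfolding cellular_sheaf_def by blast
      ultimately have "F \<rho> t j i = (\<Sum>l<n \<sigma>. F \<sigma> t j l * F \<rho> \<sigma> l i)"
        using a True by blast
      then show "(\<Sum>l<n \<sigma>. F \<sigma> t j l * F \<rho> \<sigma> l i) = F \<rho> t j i" by simp
    qed
    have "coboundary X n F (Suc m) (coboundary X n F m c) t j
        = (\<Sum>\<sigma>\<in>X1. \<Sum>l<n \<sigma>. \<Sum>\<rho>\<in>X0. \<Sum>i<n \<rho>. (incidence \<sigma> t * incidence \<rho> \<sigma>) * (F \<sigma> t j l * F \<rho> \<sigma> l i) * c \<rho> i)"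
      using True unfolding coboundary_def X0_def[symmetric] X1_def[symmetric]
      by (auto simp: X1_def sum_distrib_left mult_ac intro!: sum.cong)
    also have "\<dots> = (\<Sum>\<rho>\<in>X0. \<Sum>i<n \<rho>. \<Sum>\<sigma>\<in>X1. \<Sum>l<n \<sigma>. (incidence \<sigma> t * incidence \<rho> \<sigma>) * (F \<sigma> t j l * F \<rho> \<sigma> l i) * c \<rho> i)"
      by (rule sum4_swap)
    also have "\<dots> = (\<Sum>\<rho>\<in>X0. \<Sum>i<n \<rho>. (\<Sum>\<sigma>\<in>X1. incidence \<sigma> t * incidence \<rho> \<sigma>) * F \<rho> t j i * c \<rho> i)"
    proof (intro sum.cong refl)
      fix \<rho> i assume r: "\<rho> \<in> X0" and i: "i \<in> {..<n \<rho>}"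
      have "(\<Sum>\<sigma>\<in>X1. \<Sum>l<n \<sigma>. (incidence \<sigma> t * incidence \<rho> \<sigma>) * (F \<sigma> t j l * F \<rho> \<sigma> l i) * c \<rho> i)
          = (\<Sum>\<sigma>\<in>X1. (incidence \<sigma> t * incidence \<rho> \<sigma>) * F \<rho> t j i * c \<rho> i)"
      proof (intro sum.cong refl)
        fix \<sigma> assume s: "\<sigma> \<in> X1"
        show "(\<Sum>l<n \<sigma>. (incidence \<sigma> t * incidence \<rho> \<sigma>) * (F \<sigma> t j l * F \<rho> \<sigma> l i) * c \<rho> i)
          = (incidence \<sigma> t * incidence \<rho> \<sigma>) * F \<rho> t j i * (c \<rho> i :: 'a)"
        proof (cases "(incidence \<sigma> t :: 'a) * incidence \<rho> \<sigma> = 0")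
          case True
          then show ?thesis by auto
        next
          case False
          have "(\<Sum>l<n \<sigma>. (incidence \<sigma> t * incidence \<rho> \<sigma>) * (F \<sigma> t j l * F \<rho> \<sigma> l i) * c \<rho> i)
              = (incidence \<sigma> t * incidence \<rho> \<sigma>) * (\<Sum>l<n \<sigma>. F \<sigma> t j l * F \<rho> \<sigma> l i) * c \<rho> i"
            by (simp add: sum_distrib_left sum_distrib_right)
          then show ?thesis using funct[of \<rho> \<sigma> i] r s i False unfolding X0_def X1_def by auto
        qed
      qed
      then show "(\<Sum>\<sigma>\<in>X1. \<Sum>l<n \<sigma>. (incidence \<sigma> t * incidence \<rho> \<sigma>) * (F \<sigma> t j l * F \<rho> \<sigma> l i) * c \<rho> i)
          = (\<Sum>\<sigma>\<in>X1. incidence \<sigma> t * incidence \<rho> \<sigma>) * F \<rho> t j i * c \<rho> i"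
        by (simp add: sum_distrib_right)
    qed
    also have "\<dots> = 0"
    proof (rule sum.neutral, rule ballI)
      fix \<rho> assume r: "\<rho> \<in> X0"
      have z: "(\<Sum>\<sigma>\<in>X1. incidence \<sigma> t * incidence \<rho> \<sigma>) = (0::'a)"
        using inc_sq[OF X, of \<rho> t "Suc m"] True r unfolding X0_def X1_def by simp
      show "(\<Sum>i<n \<rho>. (\<Sum>\<sigma>\<in>X1. incidence \<sigma> t * incidence \<rho> \<sigma>) * F \<rho> t j i * c \<rho> i) = 0"
        by (simp add: z)
    qed
    finally show ?thesis by simp
  qed
qed

lemma cob_sub:
  fixes c :: "'v list \<Rightarrow> nat \<Rightarrow> 'a::field"
  assumes X: "finite X" and sub: "Xt \<subseteq> X" and c: "c \<in> cochains Xt n q"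
  shows "coboundary Xt n F q c = proj_sub Xt (coboundary X n F q c)"
proof (intro ext)
  fix t j
  show "coboundary Xt n F q c t j = proj_sub Xt (coboundary X n F q c) t j"
  proof (cases "t \<in> Xt \<and> length t = Suc q \<and> j < n t")
    case False
    then show ?thesis unfolding coboundary_def proj_sub_def by auto
  next
    case True
    have "(\<Sum>\<sigma>\<in>{\<sigma>\<in>Xt. length \<sigma> = q}. incidence \<sigma> t * (\<Sum>i<n \<sigma>. F \<sigma> t j i * c \<sigma> i))
        = (\<Sum>\<sigma>\<in>{\<sigma>\<in>X. length \<sigma> = q}. incidence \<sigma> t * (\<Sum>i<n \<sigma>. F \<sigma> t j i * c \<sigma> i))"
    proof (rule sum.mono_neutral_left)
      show "finite {\<sigma> \<in> X. length \<sigma> = q}" using X by simp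
      show "{\<sigma> \<in> Xt. length \<sigma> = q} \<subseteq> {\<sigma> \<in> X. length \<sigma> = q}" using sub by auto
      show "\<forall>\<sigma>\<in>{\<sigma> \<in> X. length \<sigma> = q} - {\<sigma> \<in> Xt. length \<sigma> = q}. incidence \<sigma> t * (\<Sum>i<n \<sigma>. F \<sigma> t j i * c \<sigma> i) = 0"
      proof
        fix \<sigma> assume "\<sigma> \<in> {\<sigma> \<in> X. length \<sigma> = q} - {\<sigma> \<in> Xt. length \<sigma> = q}"
        then have "\<sigma> \<notin> Xt" by auto
        then have "\<forall>i. c \<sigma> i = 0" using c unfolding cochains_def by auto
        then show "incidence \<sigma> t * (\<Sum>i<n \<sigma>. F \<sigma> t j i * c \<sigma> i) = 0" by simp
      qed
    qed
    then show ?thesis using True sub unfolding coboundary_def proj_sub_def by auto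
  qed
qed

lemma dim_direct:
  fixes N B :: "('v list \<Rightarrow> nat \<Rightarrow> 'a::field) set"
  assumes X: "finite X" and sN: "cv.subspace N" and sB: "cv.subspace B"
    and NA: "N \<subseteq> suppA X n" and BA: "B \<subseteq> suppA X n" and NB: "N \<inter> B \<subseteq> {0}"
  shows "cv.dim {a + b | a b. a \<in> N \<and> b \<in> B} = cv.dim N + cv.dim B"
proof -
  obtain BN where BN: "finite BN" "BN \<subseteq> N" "cv.independent BN" "cv.span BN = N" using subspace_basis[OF X sN NA] by blast
  obtain BB where BB: "finite BB" "BB \<subseteq> B" "cv.independent BB" "cv.span BB = B" using subspace_basis[OF X sB BA] by blast
  have disj: "BN \<inter> BB = {}"
  proof (rule ccontr)
    assume "BN \<inter> BB \<noteq> {}"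
    then obtain x where "x \<in> BN" "x \<in> BB" by blast
    then have "x = 0" using BN BB NB by blast
    then show False using \<open>x \<in> BN\<close> BN(3) cv.dependent_zero by blast
  qed
  have sp: "cv.span (BN \<union> BB) = {a + b | a b. a \<in> N \<and> b \<in> B}" using cv.span_Un[of BN BB] BN(4) BB(4) by simp
  have ind: "cv.independent (BN \<union> BB)"
  proof (rule cv.independent_if_scalars_zero)
    show "finite (BN \<union> BB)" using BN BB by simp
    fix f x assume s: "(\<Sum>x\<in>BN \<union> BB. (\<lambda>\<sigma> i. f x * x \<sigma> i)) = 0" and x: "x \<in> BN \<union> BB"
    define sN where "sN = (\<Sum>x\<in>BN. (\<lambda>\<sigma> i. f x * x \<sigma> i))"
    define sB where "sB = (\<Sum>x\<in>BB. (\<lambda>\<sigma> i. f x * x \<sigma> i))"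
    have "sN + sB = 0" using s sum.union_disjoint[OF BN(1) BB(1) disj, of "\<lambda>x. (\<lambda>\<sigma> i. f x * x \<sigma> i)"]
      unfolding sN_def sB_def by simp
    have "sN \<in> cv.span BN" unfolding sN_def by (rule cv.span_sum, rule cv.span_scale, rule cv.span_base, assumption)
    then have sNN: "sN \<in> N" using BN(4) by simp
    have "sB \<in> cv.span BB" unfolding sB_def by (rule cv.span_sum, rule cv.span_scale, rule cv.span_base, assumption)
    then have sBB: "sB \<in> B" using BB(4) by simp
    have "sN = - sB" using \<open>sN + sB = 0\<close> by (simp add: eq_neg_iff_add_eq_0)
    then have "sN \<in> B" using sBB sB cv.subspace_neg by metis
    then have "sN = 0" using sNN NB by blast
    then have "sB = 0" using \<open>sN + sB = 0\<close> by simp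
    show "f x = 0"
    proof (cases "x \<in> BN")
      case True
      show ?thesis using cv.independentD[OF BN(3) BN(1) subset_refl] \<open>sN = 0\<close> True unfolding sN_def by blast
    next
      case False
      then have "x \<in> BB" using x by blast
      show ?thesis using cv.independentD[OF BB(3) BB(1) subset_refl] \<open>sB = 0\<close> \<open>x \<in> BB\<close> unfolding sB_def by blast
    qed
  qed
  have ss: "cv.subspace {a + b | a b. a \<in> N \<and> b \<in> B}" by (rule cv.subspace_sums[OF sN sB])
  have "cv.dim {a + b | a b. a \<in> N \<and> b \<in> B} = card (BN \<union> BB)"
    by (rule cv.dim_eq_card[OF _ ind]) (simp add: sp cv.span_eq_iff[THEN iffD2, OF ss])
  also have "\<dots> = card BN + card BB" using card_Un_disjoint[OF BN(1) BB(1) disj] .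
  also have "card BN = cv.dim N" by (rule cv.dim_eq_card[OF _ BN(3), symmetric]) (simp add: BN(4) cv.span_eq_iff[THEN iffD2, OF sN])
  also have "card BB = cv.dim B" by (rule cv.dim_eq_card[OF _ BB(3), symmetric]) (simp add: BB(4) cv.span_eq_iff[THEN iffD2, OF sB])
  finally show ?thesis .
qed



lemma proj_sub_in: "f \<in> cochains X n m \<Longrightarrow> proj_sub Xt f \<in> cochains Xt n m"
  unfolding proj_sub_def cochains_def by auto

lemma proj_sub_id: "f \<in> cochains Xt n m \<Longrightarrow> proj_sub Xt f = f"
  unfolding proj_sub_def cochains_def by (auto simp: fun_eq_iff)

lemma proj_sub_diff: "proj_sub Xt (f - g) = proj_sub Xt f - proj_sub Xt (g :: 'v list \<Rightarrow> nat \<Rightarrow> 'a::ab_group_add)"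
  unfolding proj_sub_def by (auto simp: fun_eq_iff)

lemma proj_sub_add: "proj_sub Xt (f + g) = proj_sub Xt f + proj_sub Xt (g :: 'v list \<Rightarrow> nat \<Rightarrow> 'a::ab_group_add)"
  unfolding proj_sub_def by (auto simp: fun_eq_iff)

lemma proj_sub_scale: "proj_sub Xt (\<lambda>\<sigma> i. c * f \<sigma> i) = (\<lambda>\<sigma> i. c * proj_sub Xt (f :: 'v list \<Rightarrow> nat \<Rightarrow> 'a::field) \<sigma> i)"
  unfolding proj_sub_def by (auto simp: fun_eq_iff)

lemma proj_sub_zero: "proj_sub Xt (0 :: 'v list \<Rightarrow> nat \<Rightarrow> 'a::zero) = 0"
  unfolding proj_sub_def by (auto simp: fun_eq_iff)

lemma proj_sub_proj: "proj_sub Xt (proj_sub Xt f) = proj_sub Xt f"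
  unfolding proj_sub_def by (auto simp: fun_eq_iff)

lemma ip_proj_swap: "cinner X n h (proj_sub Xt g) = cinner X n (proj_sub Xt h) (g :: 'v list \<Rightarrow> nat \<Rightarrow> 'a::conjugatable_field)"
  unfolding cinner_def proj_sub_def by (intro sum.cong refl) auto

lemma ip_zero_left'[simp]: "cinner X n (\<lambda>a b. 0) g = 0"
  unfolding cinner_def by simp

lemma ip_zero_right'[simp]: "cinner X n g (\<lambda>a b. 0) = 0"
  unfolding cinner_def by simp

lemma cochains_mono: "Xt \<subseteq> X \<Longrightarrow> cochains Xt n m \<subseteq> cochains X n m"
  unfolding cochains_def by auto

theorem mainTheorem2:
  fixes X Xt :: "'v list set"
    and n :: "'v list \<Rightarrow> nat"
    and F :: "'v list \<Rightarrow> 'v list \<Rightarrow> nat \<Rightarrow> nat \<Rightarrow> 'a::conjugatable_ordered_field"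
    and q :: nat
  assumes "oriented_complex X"
    and "oriented_complex Xt"
    and "Xt \<subseteq> X"
    and "cellular_sheaf X n F"
  shows "cdim {x \<in> cochains Xt n (Suc q). persistent_sheaf_laplacian X Xt n F q x = 0}
           = cohom_image_dim X Xt n F q"
proof -
  have Xfin: "finite X" using assms(1) unfolding oriented_complex_def by blast
  have XtX: "Xt \<subseteq> X" by (rule assms(3))
  define C where "C = (cochains X n (Suc q) :: ('v list \<Rightarrow> nat \<Rightarrow> 'a) set)"
  define V where "V = (cochains Xt n (Suc q) :: ('v list \<Rightarrow> nat \<Rightarrow> 'a) set)"
  define C1 where "C1 = (cochains X n (Suc (Suc q)) :: ('v list \<Rightarrow> nat \<Rightarrow> 'a) set)"
  define P where "P = (cochains Xt n q :: ('v list \<Rightarrow> nat \<Rightarrow> 'a) set)"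
  define d where "d = coboundary X n F (Suc q)"
  define dq where "dq = coboundary X n F q"
  define dt where "dt = coboundary Xt n F q"
  define ds where "ds = cobstar X n F (Suc q)"
  define dts where "dts = cobstar Xt n F q"
  define Cpq where "Cpq = {e \<in> C1. ds e \<in> V}"
  define eth where "eth = adjoint_at (cinner X n) Cpq ds"
  define ip where "ip = (cinner X n :: ('v list \<Rightarrow> nat \<Rightarrow> 'a) \<Rightarrow> ('v list \<Rightarrow> nat \<Rightarrow> 'a) \<Rightarrow> 'a)"
  have dstar_eq: "adjoint_at (cinner X n) (cochains X n (Suc q)) (coboundary X n F (Suc q)) = ds"
    unfolding ds_def using adjoint_cob[OF Xfin subset_refl] by blast
  have dtstar_eq: "adjoint_at (cinner X n) (cochains Xt n q) (coboundary Xt n F q) = dts"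
    unfolding dts_def using adjoint_cob[OF Xfin XtX] by blast
  have lap: "persistent_sheaf_laplacian X Xt n F q = (\<lambda>x. adjoint_at (cinner X n) V eth (eth x) + dt (dts x))"
    unfolding persistent_sheaf_laplacian_def Let_def dstar_eq dtstar_eq eth_def Cpq_def C1_def V_def dt_def ..
  have sC: "cv.subspace C" and sV: "cv.subspace V" and sC1: "cv.subspace C1" and sP: "cv.subspace P"
    unfolding C_def V_def C1_def P_def by (rule subspace_cochains)+
  have AC: "C \<subseteq> suppA X n" and AV: "V \<subseteq> suppA X n" and AC1: "C1 \<subseteq> suppA X n" and AP: "P \<subseteq> suppA X n"
    unfolding C_def V_def C1_def P_def by (rule cochains_suppA, simp add: XtX)+
  have VC: "V \<subseteq> C" unfolding V_def C_def by (rule cochains_mono[OF XtX])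
  have F1: "\<And>u e. u \<in> C \<Longrightarrow> ip (d u) e = ip u (ds e)"
    unfolding ip_def d_def ds_def C_def using adj_cob[OF Xfin subset_refl] by blast
  have dsC: "\<And>e. ds e \<in> C" unfolding ds_def C_def by (rule cobstar_in)
  have F2: "\<And>u x. u \<in> P \<Longrightarrow> ip (dt u) x = ip u (dts x)"
    unfolding ip_def dt_def dts_def P_def using adj_cob[OF Xfin XtX] by blast
  have dtsP: "\<And>x. dts x \<in> P" unfolding dts_def P_def by (rule cobstar_in)
  have dC1: "\<And>u. d u \<in> C1" unfolding d_def C1_def by (rule cob_in)
  have dtV: "\<And>u. dt u \<in> V" unfolding dt_def V_def by (rule cob_in)
  have dqC: "\<And>u. dq u \<in> C" unfolding dq_def C_def by (rule cob_in)
  have ipc: "\<And>f g. conjugate (ip f g) = ip g f" unfolding ip_def using ip_conj[OF Xfin] by blast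
  have ds_add: "\<And>a b. ds (a + b) = ds a + ds b" unfolding ds_def by (rule cobstar_add)
  have ds_scale: "\<And>c a. ds (\<lambda>\<sigma> i. c * a \<sigma> i) = (\<lambda>\<sigma> i. c * ds a \<sigma> i)" unfolding ds_def by (rule cobstar_scale)
  have ds_zero: "ds 0 = 0" unfolding ds_def by (rule cobstar_zero)
  have selfz: "\<And>f. f \<in> suppA X n \<Longrightarrow> ip f f = 0 \<Longrightarrow> f = 0" unfolding ip_def using ip_self_zero[OF Xfin] by blast
  have sCpq: "cv.subspace Cpq"
    unfolding cv.subspace_def Cpq_def
  proof (intro conjI ballI allI)
    show "0 \<in> {e \<in> C1. ds e \<in> V}" using sC1 sV ds_zero cv.subspace_0 by auto
  next
    fix x y assume "x \<in> {e \<in> C1. ds e \<in> V}" "y \<in> {e \<in> C1. ds e \<in> V}"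
    then show "x + y \<in> {e \<in> C1. ds e \<in> V}" using sC1 sV ds_add cv.subspace_add by auto
  next
    fix c x assume "x \<in> {e \<in> C1. ds e \<in> V}"
    then show "(\<lambda>\<sigma> i. c * x \<sigma> i) \<in> {e \<in> C1. ds e \<in> V}" using sC1 sV ds_scale cv.subspace_scale by auto
  qed
  have ACpq: "Cpq \<subseteq> suppA X n" using AC1 unfolding Cpq_def by auto
  have F3: "\<And>x. x \<in> V \<Longrightarrow> eth x \<in> Cpq \<and> (\<forall>w\<in>Cpq. ip (ds w) x = ip w (eth x))"
  proof -
    fix x assume x: "x \<in> V"
    obtain p where p: "p \<in> Cpq" "\<forall>w\<in>Cpq. cinner X n w (d x - p) = 0" using proj_exists[OF Xfin sCpq ACpq] by blast
    have e: "\<forall>w\<in>Cpq. ip (ds w) x = ip w p"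
    proof
      fix w assume w: "w \<in> Cpq"
      have "ip w p = ip w (d x)" using p(2) w unfolding ip_def by (simp add: ip_diff_right)
      also have "\<dots> = conjugate (ip (d x) w)" using ipc by simp
      also have "\<dots> = conjugate (ip x (ds w))" using F1 x VC by auto
      also have "\<dots> = ip (ds w) x" using ipc by simp
      finally show "ip (ds w) x = ip w p" by simp
    qed
    have "eth x = p" unfolding eth_def
      by (rule adjoint_at_eq[OF Xfin sCpq ACpq p(1)]) (use e in \<open>simp add: ip_def\<close>)
    then show "eth x \<in> Cpq \<and> (\<forall>w\<in>Cpq. ip (ds w) x = ip w (eth x))" using p(1) e by simp
  qed
  have F4: "\<And>e. e \<in> Cpq \<Longrightarrow> adjoint_at (cinner X n) V eth e = ds e"
  proof -
    fix e assume e: "e \<in> Cpq"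
    show "adjoint_at (cinner X n) V eth e = ds e"
    proof (rule adjoint_at_eq[OF Xfin sV AV])
      show "ds e \<in> V" using e unfolding Cpq_def by simp
      show "\<forall>u\<in>V. cinner X n (eth u) e = cinner X n u (ds e)"
      proof
        fix u assume u: "u \<in> V"
        have "ip (eth u) e = conjugate (ip e (eth u))" using ipc by simp
        also have "\<dots> = conjugate (ip (ds e) u)" using F3[OF u] e by simp
        also have "\<dots> = ip u (ds e)" using ipc by simp
        finally show "cinner X n (eth u) e = cinner X n u (ds e)" unfolding ip_def .
      qed
    qed
  qed
  have lapV: "\<And>x. x \<in> V \<Longrightarrow> persistent_sheaf_laplacian X Xt n F q x = ds (eth x) + dt (dts x)"
    unfolding lap using F3 F4 by simp
  define N where "N = {x \<in> cochains Xt n (Suc q). persistent_sheaf_laplacian X Xt n F q x = 0}"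
  define M where "M = {x\<in>V. \<forall>w\<in>Cpq. ip (ds w) x = 0}"
  define B where "B = dt ` P"
  have N_char: "N = {x\<in>V. (\<forall>w\<in>Cpq. ip (ds w) x = 0) \<and> (\<forall>u\<in>P. ip (dt u) x = 0)}"
  proof (intro set_eqI iffI)
    fix x assume "x \<in> N"
    then have x: "x \<in> V" "ds (eth x) + dt (dts x) = 0" using lapV unfolding N_def V_def by auto
    have a: "eth x \<in> Cpq" using F3[OF x(1)] by simp
    have "0 = ip (ds (eth x) + dt (dts x)) x" using x(2) unfolding ip_def by simp
    also have "\<dots> = ip (ds (eth x)) x + ip (dt (dts x)) x" unfolding ip_def by (rule ip_add_left)
    also have "\<dots> = ip (eth x) (eth x) + ip (dts x) (dts x)" using F3[OF x(1)] a F2[OF dtsP] by simp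
    finally have s: "ip (eth x) (eth x) + ip (dts x) (dts x) = 0" by simp
    have nn: "ip (eth x) (eth x) \<ge> 0" "ip (dts x) (dts x) \<ge> 0" unfolding ip_def by (rule ip_self_nonneg)+
    have "ip (eth x) (eth x) = 0" "ip (dts x) (dts x) = 0" using s nn add_nonneg_eq_0_iff by blast+
    then have z: "eth x = 0" "dts x = 0" using selfz a ACpq dtsP AP by blast+
    show "x \<in> {x\<in>V. (\<forall>w\<in>Cpq. ip (ds w) x = 0) \<and> (\<forall>u\<in>P. ip (dt u) x = 0)}"
      using x(1) F3[OF x(1)] F2 z unfolding ip_def by simp
  next
    fix x assume "x \<in> {x\<in>V. (\<forall>w\<in>Cpq. ip (ds w) x = 0) \<and> (\<forall>u\<in>P. ip (dt u) x = 0)}"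
    then have x: "x \<in> V" "\<forall>w\<in>Cpq. ip (ds w) x = 0" "\<forall>u\<in>P. ip (dt u) x = 0" by auto
    have a: "eth x \<in> Cpq" using F3[OF x(1)] by simp
    have "ip (eth x) (eth x) = 0" using F3[OF x(1)] a x(2) by metis
    then have z1: "eth x = 0" using selfz a ACpq by blast
    have "ip (dts x) (dts x) = 0" using F2[OF dtsP[of x], of x] x(3) dtsP by metis
    then have z2: "dts x = 0" using selfz dtsP AP by blast
    have "dt 0 = 0" unfolding dt_def by (rule cob_zero)
    then show "x \<in> N" using lapV[OF x(1)] z1 z2 ds_zero x(1) unfolding N_def V_def by simp
  qed
  have sM: "cv.subspace M"
    unfolding cv.subspace_def M_def
  proof (intro conjI ballI allI)
    show "0 \<in> {x \<in> V. \<forall>w\<in>Cpq. ip (ds w) x = 0}" using sV cv.subspace_0 unfolding ip_def by auto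
  next
    fix x y assume "x \<in> {x \<in> V. \<forall>w\<in>Cpq. ip (ds w) x = 0}" "y \<in> {x \<in> V. \<forall>w\<in>Cpq. ip (ds w) x = 0}"
    then show "x + y \<in> {x \<in> V. \<forall>w\<in>Cpq. ip (ds w) x = 0}" using sV cv.subspace_add unfolding ip_def by (auto simp: ip_add_right)
  next
    fix c x assume "x \<in> {x \<in> V. \<forall>w\<in>Cpq. ip (ds w) x = 0}"
    then show "(\<lambda>\<sigma> i. c * x \<sigma> i) \<in> {x \<in> V. \<forall>w\<in>Cpq. ip (ds w) x = 0}" using sV cv.subspace_scale unfolding ip_def by (auto simp: ip_scale_right)
  qed
  have sN: "cv.subspace N"
    unfolding cv.subspace_def N_char
  proof (intro conjI ballI allI)
    show "0 \<in> {x\<in>V. (\<forall>w\<in>Cpq. ip (ds w) x = 0) \<and> (\<forall>u\<in>P. ip (dt u) x = 0)}" using sV cv.subspace_0 unfolding ip_def by auto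
  next
    fix x y assume "x \<in> {x\<in>V. (\<forall>w\<in>Cpq. ip (ds w) x = 0) \<and> (\<forall>u\<in>P. ip (dt u) x = 0)}" "y \<in> {x\<in>V. (\<forall>w\<in>Cpq. ip (ds w) x = 0) \<and> (\<forall>u\<in>P. ip (dt u) x = 0)}"
    then show "x + y \<in> {x\<in>V. (\<forall>w\<in>Cpq. ip (ds w) x = 0) \<and> (\<forall>u\<in>P. ip (dt u) x = 0)}" using sV cv.subspace_add unfolding ip_def by (auto simp: ip_add_right)
  next
    fix c x assume "x \<in> {x\<in>V. (\<forall>w\<in>Cpq. ip (ds w) x = 0) \<and> (\<forall>u\<in>P. ip (dt u) x = 0)}"
    then show "(\<lambda>\<sigma> i. c * x \<sigma> i) \<in> {x\<in>V. (\<forall>w\<in>Cpq. ip (ds w) x = 0) \<and> (\<forall>u\<in>P. ip (dt u) x = 0)}" using sV cv.subspace_scale unfolding ip_def by (auto simp: ip_scale_right)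
  qed
  have dt_add: "\<And>a b. dt (a + b) = dt a + dt b" unfolding dt_def by (rule cob_add)
  have dt_scale: "\<And>c a. dt (\<lambda>\<sigma> i. c * a \<sigma> i) = (\<lambda>\<sigma> i. c * dt a \<sigma> i)" unfolding dt_def by (rule cob_scale)
  have dt_zero: "dt 0 = 0" unfolding dt_def by (rule cob_zero)
  have sB: "cv.subspace B"
    unfolding cv.subspace_def B_def
  proof (intro conjI ballI allI)
    show "0 \<in> dt ` P" using sP cv.subspace_0 dt_zero by (metis image_eqI)
  next
    fix x y assume "x \<in> dt ` P" "y \<in> dt ` P"
    then obtain a b where "a \<in> P" "b \<in> P" "x = dt a" "y = dt b" by blast
    then show "x + y \<in> dt ` P" using dt_add sP cv.subspace_add by (metis image_eqI)
  next
    fix c x assume "x \<in> dt ` P"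
    then obtain a where "a \<in> P" "x = dt a" by blast
    then show "(\<lambda>\<sigma> i. c * x \<sigma> i) \<in> dt ` P" using dt_scale sP cv.subspace_scale by (metis image_eqI)
  qed
  have MV: "M \<subseteq> V" unfolding M_def by auto
  have NM: "N \<subseteq> M" unfolding N_char M_def by auto
  have BV: "B \<subseteq> V" unfolding B_def using dtV by auto
  have AN: "N \<subseteq> suppA X n" using NM MV AV by auto
  have AB: "B \<subseteq> suppA X n" using BV AV by auto
  have projV: "\<And>x. x \<in> V \<Longrightarrow> proj_sub Xt x = x" unfolding V_def by (rule proj_sub_id)
  have projC: "\<And>x. x \<in> C \<Longrightarrow> proj_sub Xt x \<in> V" unfolding V_def C_def by (rule proj_sub_in)
  have BM: "B \<subseteq> M"
  proof
    fix b assume "b \<in> B"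
    then obtain c where c: "c \<in> P" "b = dt c" unfolding B_def by blast
    have bV: "b \<in> V" using c dtV by simp
    have eq: "dt c = proj_sub Xt (dq c)" unfolding dt_def dq_def using cob_sub[OF Xfin XtX] c(1) unfolding P_def by blast
    have dd: "d (dq c) = 0" unfolding d_def dq_def by (rule cob_cob[OF assms(1) assms(4)])
    have "\<forall>w\<in>Cpq. ip (ds w) b = 0"
    proof
      fix w assume w: "w \<in> Cpq"
      have dswV: "ds w \<in> V" using w unfolding Cpq_def by simp
      have "ip (ds w) b = ip (proj_sub Xt (ds w)) (dq c)" unfolding c(2) eq ip_def by (rule ip_proj_swap)
      also have "\<dots> = ip (ds w) (dq c)" using projV[OF dswV] by simp
      also have "\<dots> = conjugate (ip (dq c) (ds w))" using ipc by simp
      also have "\<dots> = conjugate (ip (d (dq c)) w)" using F1[OF dqC] by simp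
      also have "\<dots> = 0" unfolding dd ip_def by simp
      finally show "ip (ds w) b = 0" .
    qed
    then show "b \<in> M" unfolding M_def using bV by simp
  qed
  define Z where "Z = {z \<in> C. d z = 0}"
  have G1: "proj_sub Xt ` Z = M"
  proof (intro set_eqI iffI)
    fix x assume "x \<in> proj_sub Xt ` Z"
    then obtain z where z: "z \<in> C" "d z = 0" "x = proj_sub Xt z" unfolding Z_def by blast
    have xV: "x \<in> V" using projC z by simp
    have "\<forall>w\<in>Cpq. ip (ds w) x = 0"
    proof
      fix w assume w: "w \<in> Cpq"
      have dswV: "ds w \<in> V" using w unfolding Cpq_def by simp
      have "ip (ds w) x = ip (proj_sub Xt (ds w)) z" unfolding z(3) ip_def by (rule ip_proj_swap)
      also have "\<dots> = ip (ds w) z" using projV[OF dswV] by simp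
      also have "\<dots> = conjugate (ip z (ds w))" using ipc by simp
      also have "\<dots> = conjugate (ip (d z) w)" using F1[OF z(1)] by simp
      also have "\<dots> = 0" unfolding z(2) ip_def by simp
      finally show "ip (ds w) x = 0" .
    qed
    then show "x \<in> M" unfolding M_def using xV by simp
  next
    fix v assume vM: "v \<in> M"
    then have vV: "v \<in> V" and vperp: "\<forall>w\<in>Cpq. ip (ds w) v = 0" unfolding M_def by auto
    have vC: "v \<in> C" using vV VC by auto
    define Y where "Y = {y \<in> C. proj_sub Xt y = 0}"
    define D where "D = d ` Y"
    have d_add: "\<And>a b. d (a + b) = d a + d b" unfolding d_def by (rule cob_add)
    have d_diff: "\<And>a b. d (a - b) = d a - d b" unfolding d_def by (rule cob_diff)
    have d_scale: "\<And>c a. d (\<lambda>\<sigma> i. c * a \<sigma> i) = (\<lambda>\<sigma> i. c * d a \<sigma> i)" unfolding d_def by (rule cob_scale)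
    have d_zero: "d 0 = 0" unfolding d_def by (rule cob_zero)
    have sY: "cv.subspace Y"
      unfolding cv.subspace_def Y_def
    proof (intro conjI ballI allI)
      show "0 \<in> {y \<in> C. proj_sub Xt y = 0}" using sC cv.subspace_0 proj_sub_zero by auto
    next
      fix x y assume "x \<in> {y \<in> C. proj_sub Xt y = 0}" "y \<in> {y \<in> C. proj_sub Xt y = 0}"
      then show "x + y \<in> {y \<in> C. proj_sub Xt y = 0}" using sC cv.subspace_add by (auto simp: proj_sub_add)
    next
      fix c x assume "x \<in> {y \<in> C. proj_sub Xt y = 0}"
      then show "(\<lambda>\<sigma> i. c * x \<sigma> i) \<in> {y \<in> C. proj_sub Xt y = 0}" using sC cv.subspace_scale
        by (auto simp: proj_sub_scale fun_eq_iff)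
    qed
    have sD: "cv.subspace D"
      unfolding cv.subspace_def D_def
    proof (intro conjI ballI allI)
      show "0 \<in> d ` Y" using sY cv.subspace_0 d_zero by (metis image_eqI)
    next
      fix x y assume "x \<in> d ` Y" "y \<in> d ` Y"
      then obtain a b where "a \<in> Y" "b \<in> Y" "x = d a" "y = d b" by blast
      then show "x + y \<in> d ` Y" using d_add sY cv.subspace_add by (metis image_eqI)
    next
      fix c x assume "x \<in> d ` Y"
      then obtain a where "a \<in> Y" "x = d a" by blast
      then show "(\<lambda>\<sigma> i. c * x \<sigma> i) \<in> d ` Y" using d_scale sY cv.subspace_scale by (metis image_eqI)
    qed
    have AD: "D \<subseteq> suppA X n" unfolding D_def using dC1 AC1 by auto
    obtain p where p: "p \<in> D" "\<forall>u\<in>D. cinner X n u (d v - p) = 0" using proj_exists[OF Xfin sD AD] by blast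
    obtain y0 where y0: "y0 \<in> Y" "p = d y0" using p(1) unfolding D_def by blast
    define r where "r = d v - p"
    have r_eq: "r = d (v - y0)" unfolding r_def y0(2) d_diff ..
    have rC1: "r \<in> C1" unfolding r_eq by (rule dC1)
    define g where "g = ds r"
    define h where "h = g - proj_sub Xt g"
    have gC: "g \<in> C" unfolding g_def by (rule dsC)
    have pgV: "proj_sub Xt g \<in> V" using projC[OF gC] .
    have hC: "h \<in> C" unfolding h_def using gC pgV VC sC cv.subspace_diff by blast
    have hY: "h \<in> Y" unfolding Y_def h_def using hC unfolding h_def by (simp add: proj_sub_diff proj_sub_proj)
    have "ip h g = ip (d h) r" unfolding g_def using F1[OF hC] by simp
    also have "\<dots> = 0" using p(2) hY unfolding D_def r_def ip_def by blast
    finally have hg: "ip h g = 0" .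
    have hpg: "ip h (proj_sub Xt g) = 0"
    proof -
      have "ip h (proj_sub Xt g) = ip (proj_sub Xt h) g" unfolding ip_def by (rule ip_proj_swap)
      also have "proj_sub Xt h = 0" using hY unfolding Y_def by simp
      finally show ?thesis unfolding ip_def by simp
    qed
    have "ip h h = 0" unfolding h_def using hg hpg unfolding h_def ip_def by (simp add: ip_diff_right)
    then have "h = 0" using selfz hC AC by blast
    then have gV: "g \<in> V" using pgV unfolding h_def by simp
    have rCpq: "r \<in> Cpq" unfolding Cpq_def using rC1 gV unfolding g_def by simp
    have "ip r r = ip (d v) r - ip p r" unfolding r_def ip_def by (rule ip_diff_left)
    also have "ip p r = 0" using p unfolding r_def ip_def by blast
    also have "ip (d v) r = ip v (ds r)" using F1[OF vC] by simp
    also have "\<dots> = conjugate (ip (ds r) v)" using ipc by simp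
    also have "\<dots> = 0" using vperp rCpq by simp
    finally have "ip r r = 0" by simp
    then have "r = 0" using selfz rC1 AC1 by blast
    then have dz: "d (v - y0) = 0" unfolding r_eq .
    have y0C: "y0 \<in> C" and py0: "proj_sub Xt y0 = 0" using y0(1) unfolding Y_def by auto
    have zC: "v - y0 \<in> C" using vC y0C sC cv.subspace_diff by blast
    have "proj_sub Xt (v - y0) = v" using projV[OF vV] py0 by (simp add: proj_sub_diff)
    then show "v \<in> proj_sub Xt ` Z" unfolding Z_def using zC dz by (metis (mono_tags, lifting) image_eqI mem_Collect_eq)
  qed
  have G3: "{a + b | a b. a \<in> M \<and> b \<in> B} = M"
  proof (intro set_eqI iffI)
    fix x assume "x \<in> {a + b | a b. a \<in> M \<and> b \<in> B}"
    then show "x \<in> M" using BM sM cv.subspace_add by blast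
  next
    fix x assume "x \<in> M"
    moreover have "(0 :: 'v list \<Rightarrow> nat \<Rightarrow> 'a) \<in> B" using sB cv.subspace_0 by blast
    ultimately show "x \<in> {a + b | a b. a \<in> M \<and> b \<in> B}" by (metis (mono_tags, lifting) add.right_neutral mem_Collect_eq)
  qed
  have G4: "M = {a + b | a b. a \<in> N \<and> b \<in> B}"
  proof (intro set_eqI iffI)
    fix x assume "x \<in> {a + b | a b. a \<in> N \<and> b \<in> B}"
    then show "x \<in> M" using BM NM sM cv.subspace_add by blast
  next
    fix x assume xM: "x \<in> M"
    obtain pb where pb: "pb \<in> B" "\<forall>u\<in>B. cinner X n u (x - pb) = 0" using proj_exists[OF Xfin sB AB] by blast
    have aM: "x - pb \<in> M" using xM pb(1) BM sM cv.subspace_diff by blast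
    have "\<forall>u\<in>P. ip (dt u) (x - pb) = 0" using pb(2) unfolding B_def ip_def by blast
    then have "x - pb \<in> N" using aM unfolding N_char M_def by blast
    moreover have "x = (x - pb) + pb" by simp
    ultimately show "x \<in> {a + b | a b. a \<in> N \<and> b \<in> B}" using pb(1) by blast
  qed
  have G5: "N \<inter> B \<subseteq> {0}"
  proof
    fix x assume x: "x \<in> N \<inter> B"
    then obtain u where u: "u \<in> P" "x = dt u" unfolding B_def by blast
    have "ip x x = 0" using x u unfolding N_char by auto
    then have "x = 0" using selfz x AN by blast
    then show "x \<in> {0}" by simp
  qed
  have G6: "cv.dim {a + b | a b. a \<in> N \<and> b \<in> B} = cv.dim N + cv.dim B"
    by (rule dim_direct[OF Xfin sN sB AN AB G5])
  have rhs: "cohom_image_dim X Xt n F q = cdim {a + b | a b. a \<in> proj_sub Xt ` Z \<and> b \<in> B} - cdim B"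
    unfolding cohom_image_dim_def Let_def Z_def B_def C_def d_def dt_def P_def ..
  have "cohom_image_dim X Xt n F q = cv.dim N"
    unfolding rhs G1 G3 cdim_cv using G4 G6 by simp
  then show ?thesis unfolding N_def[symmetric] cdim_cv by simp
qed


end
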